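(* Fix $\omega>0$. For every $s\in\mathbb Z$, the reflection $(B,A)\mapsto(B,-A)$ maps each of the curves $\partial L_{s,+}$, $\partial L_{s,-}$ to itself if $s$ is even, and interchanges $\partial L_{s,+}$ and $\partial L_{s,-}$ if $s$ is odd. In particular, for every even $s$ the curves $\partial L_{s,\pm}$ are orthogonal to the $B$-axis at the growth point of $L_s$. The reflection $(B,A)\mapsto(-B,A)$ maps $\partial L_{s,\pm}$ onto $\partial L_{-s,\mp}$ for even $s$, and maps $\partial L_{s,\pm}$ onto $\partial L_{-s,\pm}$ for odd $s$.
   Context: For $(B,A)\in\mathbb R^2$ consider $\frac{d\varphi}{dt}=-\sin\varphi+B+A\cos\omega t$; with $\tau=\omega t$, $l=B/\omega$, $\mu=A/(2\omega)$ this gives the vector field $\dot\varphi=-\frac{\sin\varphi}{\omega}+l+2\mu\cos\tau$, $\dot\tau=1$ on the torus $\mathbb R^2/2\pi\mathbb Z^2$ with coordinates $(\varphi,\tau)$. The rotation number is $\rho(B,A;\omega)=\lim_{k\to+\infty}\varphi(2\pi k)/(2\pi k)$; for $s\in\mathbb Z$, $L_s=\{\rho=s\}\subset\mathbb R^2_{(B,A)}$ is the phase-lock area. The Poincaré map $h_{(B,A)}$ is the time-$2\pi$ flow map on the circle $\{\tau=0\}$. $\partial L_{s,\pm}$ denotes the set of points of $L_s$ at which $h_{(B,A)}$ fixes $\pm\frac\pi2\pmod{2\pi}$; it is known that $\partial L_s=\partial L_{s,+}\cup\partial L_{s,-}$ and each $\partial L_{s,\pm}$ is the graph of an analytic function $B=g_{s,\pm}(A)$.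 The growth point of $L_s$ is its intersection point with the $B$-axis $\{A=0\}$. *)

theory Defs
  imports "HOL-Analysis.Analysis"
begin

text \<open>Vector field on the torus in the time \<tau> = \<omega> t, with l = B/\<omega>, \<mu> = A/(2\<omega>):
  d\<phi>/d\<tau> = - sin \<phi> / \<omega> + l + 2 \<mu> cos \<tau>.\<close>
definition jvf :: "real \<Rightarrow> real \<Rightarrow> real \<Rightarrow> real \<Rightarrow> real \<Rightarrow> real" where
  "jvf \<omega> B A \<tau> \<phi> = - sin \<phi> / \<omega> + B / \<omega> + 2 * (A / (2 * \<omega>)) * cos \<tau>"

text \<open>The (lifted) solution with initial value x at \<tau> = 0 (unique, global).\<close>
definition jflow :: "real \<Rightarrow> real \<Rightarrow> real \<Rightarrow> real \<Rightarrow> real \<Rightarrow> real" where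
  "jflow \<omega> B A x = (THE \<phi>. \<phi> 0 = x \<and>
      (\<forall>t. (\<phi> has_real_derivative jvf \<omega> B A t (\<phi> t)) (at t)))"

definition rotnum :: "real \<Rightarrow> real \<Rightarrow> real \<Rightarrow> real" where
  "rotnum \<omega> B A = lim (\<lambda>k::nat. jflow \<omega> B A 0 (2 * pi * real k) / (2 * pi * real k))"

definition poincare :: "real \<Rightarrow> real \<Rightarrow> real \<Rightarrow> real \<Rightarrow> real" where
  "poincare \<omega> B A x = jflow \<omega> B A x (2 * pi)"

definition phase_lock :: "real \<Rightarrow> int \<Rightarrow> (real \<times> real) set" where
  "phase_lock \<omega> s = {(B, A). rotnum \<omega> B A = real_of_int s}"

text \<open>\<partial>L_{s,+} (sign = True) and \<partial>L_{s,-} (sign = False): points of L_s at which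
  the Poincare map fixes +-\<pi>/2 modulo 2\<pi>.\<close>
definition bdry :: "real \<Rightarrow> int \<Rightarrow> bool \<Rightarrow> (real \<times> real) set" where
  "bdry \<omega> s sg = {(B, A). (B, A) \<in> phase_lock \<omega> s \<and>
     (\<exists>k::int. poincare \<omega> B A (if sg then pi / 2 else - pi / 2)
                = (if sg then pi / 2 else - pi / 2) + 2 * pi * real_of_int k)}"

end

theory Submission
  imports Defs
begin

definition Jint :: "(real \<Rightarrow> real) \<Rightarrow> real \<Rightarrow> real" where
  "Jint g t = (if 0 \<le> t then integral {0..t} g else - integral {t..0} g)"

lemma cont_integrable: "continuous_on UNIV g \<Longrightarrow> (g::real\<Rightarrow>real) integrable_on {a..b}"
  by (rule integrable_continuous_real, erule continuous_on_subset) auto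

lemma Jint_repr:
  assumes g: "continuous_on UNIV g" and R: "-R \<le> u" "u \<le> R"
  shows "Jint g u = integral {-R..u} g - integral {-R..0} g"
proof (cases "0 \<le> u")
  case True
  have "integral {-R..0} g + integral {0..u} g = integral {-R..u} g"
    using True R Henstock_Kurzweil_Integration.integral_combine[where a="-R" and c=0 and b=u and f=g] cont_integrable[OF g] by auto
  then show ?thesis using True by (simp add: Jint_def)
next
  case False
  have "integral {-R..u} g + integral {u..0} g = integral {-R..0} g"
    using False R Henstock_Kurzweil_Integration.integral_combine[where a="-R" and c=u and b=0 and f=g] cont_integrable[OF g] by auto
  then show ?thesis using False by (simp add: Jint_def)
qed

lemma Jint_deriv:
  assumes g: "continuous_on UNIV g"
  shows "(Jint g has_real_derivative g t) (at t)"
proof -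
  define R where "R = \<bar>t\<bar> + 1"
  have "((\<lambda>u. integral {-R..u} g) has_real_derivative g t) (at t within {-R..R})"
    by (rule integral_has_real_derivative) (auto intro: continuous_on_subset[OF g] simp: R_def)
  moreover have "at t within {-R..R} = at t"
    by (rule at_within_Icc_at) (auto simp: R_def)
  ultimately have "((\<lambda>u. integral {-R..u} g - integral {-R..0} g) has_real_derivative g t) (at t)"
    by (auto intro!: derivative_eq_intros)
  then show ?thesis
    by (rule has_field_derivative_transform_within_open[where S="{-R<..<R}"])
       (auto simp: R_def Jint_repr[OF g, of "\<bar>t\<bar> + 1"])
qed

lemma Jint_0[simp]: "Jint g 0 = 0"
  by (simp add: Jint_def)

lemma Jint_cont: "continuous_on UNIV g \<Longrightarrow> continuous_on UNIV (Jint g)"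
  by (meson DERIV_isCont Jint_deriv continuous_at_imp_continuous_on)

lemma Jint_bound:
  assumes g: "continuous_on UNIV g" and M: "\<And>s. \<bar>g s\<bar> \<le> M"
  shows "\<bar>Jint g t\<bar> \<le> M * \<bar>t\<bar>"
proof (cases "0 \<le> t")
  case True
  have "norm (integral {0..t} g) \<le> integral {0..t} (\<lambda>_. M)"
    by (rule integral_norm_bound_integral) (auto intro: integrable_continuous_real continuous_on_subset[OF g] M)
  then show ?thesis using True by (simp add: Jint_def mult.commute)
next
  case False
  have "norm (integral {t..0} g) \<le> integral {t..0} (\<lambda>_. M)"
    by (rule integral_norm_bound_integral) (auto intro: integrable_continuous_real continuous_on_subset[OF g] M)
  then show ?thesis using False by (simp add: Jint_def mult.commute)
qed

lemma exp_integral: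
  fixes a b c :: real
  assumes "a \<le> b" "c \<noteq> 0"
  shows "integral {a..b} (\<lambda>s. exp (c * s)) = (exp (c*b) - exp (c*a)) / c"
proof -
  have "((\<lambda>s. exp (c * s)) has_integral (exp (c*b)/c - exp (c*a)/c)) {a..b}"
    apply (rule fundamental_theorem_of_calculus[OF assms(1)])
    using assms(2)
    by (auto intro!: derivative_eq_intros simp: has_real_derivative_iff_has_vector_derivative[symmetric])
  then show ?thesis using assms by (simp add: integral_unique diff_divide_distrib)
qed

lemma Jint_bound_exp:
  assumes g: "continuous_on UNIV g" and c: "c > 0" and K: "\<And>s. \<bar>g s\<bar> \<le> K * exp (c * \<bar>s\<bar>)"
  shows "\<bar>Jint g t\<bar> \<le> K * (exp (c * \<bar>t\<bar>) - 1) / c"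
proof (cases "0 \<le> t")
  case True
  have "\<bar>g s\<bar> \<le> K * exp (c * s)" if "0 \<le> s" for s using K[of s] that by simp
  then have "norm (integral {0..t} g) \<le> integral {0..t} (\<lambda>s. K * exp (c * s))"
    by (intro integral_norm_bound_integral) (auto intro!: cont_integrable[OF g] integrable_continuous_real continuous_intros)
  also have "\<dots> = K * ((exp (c*t) - exp (c*0)) / c)"
    using True c by (simp add: exp_integral)
  finally show ?thesis using True by (simp add: Jint_def)
next
  case False
  have "\<bar>g s\<bar> \<le> K * exp ((-c) * s)" if "s \<le> 0" for s using K[of s] that by simp
  then have "norm (integral {t..0} g) \<le> integral {t..0} (\<lambda>s. K * exp ((-c) * s))"
    by (intro integral_norm_bound_integral) (auto intro!: cont_integrable[OF g] integrable_continuous_real continuous_intros)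
  also have "\<dots> = K * ((exp ((-c)*0) - exp ((-c)*t)) / (-c))"
    using False c exp_integral[of t 0 "-c"] by simp
  finally show ?thesis using False c by (simp add: Jint_def divide_simps algebra_simps)
qed


lemma Jint_diff:
  assumes "continuous_on UNIV g1" "continuous_on UNIV g2"
  shows "Jint g1 t - Jint g2 t = Jint (\<lambda>s. g1 s - g2 s) t"
  using assms by (auto simp: Jint_def integral_diff cont_integrable)

lemma ode_unique:
  fixes G :: "real \<Rightarrow> real \<Rightarrow> real"
  assumes GL: "\<And>t y z. \<bar>G t y - G t z\<bar> \<le> L * \<bar>y - z\<bar>" and L: "L \<ge> 0"
    and f: "\<And>t. (f has_real_derivative G t (f t)) (at t)"
    and g: "\<And>t. (g has_real_derivative G t (g t)) (at t)"
    and eq: "f t0 = g t0"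
  shows "f t = g t"
proof -
  define d where "d u = f u - g u" for u
  define d' where "d' u = G u (f u) - G u (g u)" for u
  have dd: "(d has_real_derivative d' u) (at u)" for u
    unfolding d_def[abs_def] d'_def by (rule DERIV_diff[OF f g])
  have ddw: "(d has_real_derivative d' u) (at u within S)" for u S
    using dd by (rule has_field_derivative_at_within)
  have dsq: "((\<lambda>u. (d u)^2) has_real_derivative 2 * d u * d' u) (at u)" for u
    using DERIV_power[OF dd, of 2] by (simp add: power2_eq_square mult_ac)
  have dexp: "((\<lambda>u. exp (c * u)) has_real_derivative exp (c * u) * c) (at u)" for u c :: real
    by (rule DERIV_fun_exp) (auto intro!: derivative_eq_intros)
  have key: "d u * d' u \<le> L * (d u)^2" for u
  proof -
    have "d u * d' u \<le> \<bar>d u\<bar> * \<bar>d' u\<bar>" by (simp add: abs_mult[symmetric])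
    also have "\<dots> \<le> \<bar>d u\<bar> * (L * \<bar>d u\<bar>)"
      by (rule mult_left_mono) (auto simp: d'_def d_def GL)
    finally show ?thesis by (simp add: power2_eq_square algebra_simps)
  qed
  have "(d t)^2 = 0"
  proof (cases "t0 \<le> t")
    case True
    define e where "e u = (d u)^2 * exp (- (2*L) * u)" for u
    have "e t0 \<ge> e t"
    proof (rule DERIV_nonpos_imp_nonincreasing[OF True])
      fix u
      have "(e has_real_derivative (2 * d u * d' u * exp (- (2*L) * u) + (d u)^2 * (exp (- (2*L) * u) * (- (2*L))))) (at u)"
        unfolding e_def[abs_def] by (rule DERIV_cong[OF DERIV_mult[OF dsq dexp]]) (simp add: algebra_simps)
      moreover have "2 * d u * d' u * exp (- (2*L) * u) + (d u)^2 * (exp (- (2*L) * u) * (- (2*L))) =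
          2 * exp (- (2*L) * u) * (d u * d' u - L * (d u)^2)" by (simp add: algebra_simps)
      moreover have "2 * exp (- (2*L) * u) * (d u * d' u - L * (d u)^2) \<le> 0"
        using key[of u] by (simp add: mult_nonneg_nonpos)
      ultimately show "\<exists>y. (e has_real_derivative y) (at u) \<and> y \<le> 0" by metis
    qed
    moreover have "e t0 = 0" using eq by (simp add: e_def d_def)
    ultimately have "(d t)^2 * exp (- (2*L) * t) \<le> 0" by (simp add: e_def)
    then have "(d t)^2 \<le> 0" by (simp add: mult_le_0_iff)
    then show ?thesis by simp
  next
    case False
    define e where "e u = (d u)^2 * exp ((2*L) * u)" for u
    have "e t \<le> e t0"
    proof (rule DERIV_nonneg_imp_nondecreasing[of t t0 e])
      show "t \<le> t0" using False by simp
      fix u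
      have "(e has_real_derivative (2 * d u * d' u * exp ((2*L) * u) + (d u)^2 * (exp ((2*L) * u) * ((2*L))))) (at u)"
        unfolding e_def[abs_def] by (rule DERIV_cong[OF DERIV_mult[OF dsq dexp]]) (simp add: algebra_simps)
      moreover have "2 * d u * d' u * exp ((2*L) * u) + (d u)^2 * (exp ((2*L) * u) * ((2*L))) =
          2 * exp ((2*L) * u) * (d u * d' u + L * (d u)^2)" by (simp add: algebra_simps)
      moreover have "d u * d' u \<ge> - L * (d u)^2"
      proof -
        have "- (d u * d' u) \<le> \<bar>d u\<bar> * \<bar>d' u\<bar>" by (simp add: abs_mult[symmetric])
        also have "\<dots> \<le> \<bar>d u\<bar> * (L * \<bar>d u\<bar>)"
          by (rule mult_left_mono) (auto simp: d'_def d_def GL)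
        finally show ?thesis by (simp add: power2_eq_square algebra_simps)
      qed
      then have "2 * exp ((2*L) * u) * (d u * d' u + L * (d u)^2) \<ge> 0"
        by (intro mult_nonneg_nonneg) auto
      ultimately show "\<exists>y. (e has_real_derivative y) (at u) \<and> y \<ge> 0" by metis
    qed
    moreover have "e t0 = 0" using eq by (simp add: e_def d_def)
    ultimately have "(d t)^2 * exp ((2*L) * t) \<le> 0" by (simp add: e_def)
    then have "(d t)^2 \<le> 0" by (simp add: mult_le_0_iff)
    then show ?thesis by simp
  qed
  then show ?thesis by (simp add: d_def)
qed


lemma ode_exists:
  fixes G :: "real \<Rightarrow> real \<Rightarrow> real"
  assumes Gc: "\<And>f. continuous_on UNIV f \<Longrightarrow> continuous_on UNIV (\<lambda>t. G t (f t))"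
    and GM: "\<And>t y. \<bar>G t y\<bar> \<le> M"
    and GL: "\<And>t y z. \<bar>G t y - G t z\<bar> \<le> L * \<bar>y - z\<bar>" and L: "L > 0"
  shows "\<exists>\<phi>. \<phi> 0 = x \<and> (\<forall>t. (\<phi> has_real_derivative G t (\<phi> t)) (at t))"
proof -
  have M0: "M \<ge> 0" using GM[of 0 0] by simp
  define W where "W t = exp (2*L*\<bar>t\<bar>)" for t
  have Wpos: "W t > 0" for t by (simp add: W_def)
  have Wc: "continuous_on UNIV W" unfolding W_def by (intro continuous_intros)
  have Wge: "2*L*\<bar>t\<bar> \<le> W t" for t
    unfolding W_def using exp_ge_add_one_self[of "2*L*\<bar>t\<bar>"] by linarith
  define \<Theta> where "\<Theta> \<psi> = (\<lambda>t. (x + Jint (\<lambda>s. G s (\<psi> s * W s)) t) / W t)" for \<psi> :: "real \<Rightarrow> real"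
  have gc: "continuous_on UNIV (\<lambda>s. G s (apply_bcontfun \<psi> s * W s))" for \<psi> :: "real \<Rightarrow>\<^sub>C real"
    by (intro Gc continuous_intros Wc) auto
  have inb: "\<Theta> (apply_bcontfun \<psi>) \<in> bcontfun" for \<psi> :: "real \<Rightarrow>\<^sub>C real"
  proof (rule bcontfun_normI)
    show "continuous_on UNIV (\<Theta> (apply_bcontfun \<psi>))"
      unfolding \<Theta>_def using Wpos
      by (intro continuous_intros Wc Jint_cont gc) (auto simp: less_imp_neq[symmetric])
    fix t
    have J: "\<bar>Jint (\<lambda>s. G s (apply_bcontfun \<psi> s * W s)) t\<bar> \<le> M * \<bar>t\<bar>"
      by (rule Jint_bound[OF gc GM])
    have "norm (\<Theta> (apply_bcontfun \<psi>) t) \<le> (\<bar>x\<bar> + M * \<bar>t\<bar>) / W t"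
      unfolding \<Theta>_def using Wpos[of t] J
      by (auto simp: abs_divide divide_right_mono intro!: divide_right_mono)
    also have "\<dots> = \<bar>x\<bar> / W t + M * \<bar>t\<bar> / W t" by (simp add: add_divide_distrib)
    also have "\<bar>x\<bar> / W t \<le> \<bar>x\<bar>"
      using Wpos[of t] mult_left_mono[of 1 "W t" "\<bar>x\<bar>"] L by (simp add: W_def divide_le_eq)
    also have "M * \<bar>t\<bar> / W t \<le> M / (2*L)"
      using Wpos[of t] Wge[of t] L M0
      by (simp add: divide_simps) (metis mult.assoc mult.commute mult_left_mono)
    finally show "norm (\<Theta> (apply_bcontfun \<psi>) t) \<le> \<bar>x\<bar> + M / (2*L)" by simp
  qed
  define T where "T \<psi> = Bcontfun (\<Theta> (apply_bcontfun \<psi>))" for \<psi> :: "real \<Rightarrow>\<^sub>C real"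
  have Tapp: "apply_bcontfun (T \<psi>) = \<Theta> (apply_bcontfun \<psi>)" for \<psi>
    unfolding T_def using inb by (simp add: Bcontfun_inverse)
  have contr: "dist (T a) (T b) \<le> 1/2 * dist a b" for a b
  proof (rule dist_bound)
    fix t
    define D where "D = dist a b"
    define g1 where "g1 s = G s (apply_bcontfun a s * W s)" for s
    define g2 where "g2 s = G s (apply_bcontfun b s * W s)" for s
    have c1: "continuous_on UNIV g1" unfolding g1_def by (rule gc)
    have c2: "continuous_on UNIV g2" unfolding g2_def by (rule gc)
    have bnd: "\<bar>g1 s - g2 s\<bar> \<le> (L * D) * exp ((2*L) * \<bar>s\<bar>)" for s
    proof -
      have "\<bar>g1 s - g2 s\<bar> \<le> L * \<bar>apply_bcontfun a s * W s - apply_bcontfun b s * W s\<bar>"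
        unfolding g1_def g2_def by (rule GL)
      also have "\<dots> = L * (\<bar>apply_bcontfun a s - apply_bcontfun b s\<bar> * W s)"
        using Wpos[of s] by (simp add: left_diff_distrib[symmetric] abs_mult)
      also have "\<dots> \<le> L * (D * W s)"
        using dist_bounded[of a s b] Wpos[of s] L unfolding D_def dist_real_def
        by (intro mult_left_mono mult_right_mono) auto
      finally show ?thesis by (simp add: W_def mult.assoc)
    qed
    have "\<bar>Jint (\<lambda>s. g1 s - g2 s) t\<bar> \<le> (L * D) * (exp ((2*L) * \<bar>t\<bar>) - 1) / (2*L)"
      by (rule Jint_bound_exp) (use c1 c2 bnd L in \<open>auto intro: continuous_intros\<close>)
    also have "\<dots> \<le> D / 2 * W t"
      using L zero_le_dist[of a b] by (simp add: W_def D_def divide_simps right_diff_distrib)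
    finally have *: "\<bar>Jint g1 t - Jint g2 t\<bar> \<le> D / 2 * W t"
      using Jint_diff[OF c1 c2] by simp
    have "dist (T a t) (T b t) = \<bar>Jint g1 t - Jint g2 t\<bar> / W t"
      unfolding Tapp \<Theta>_def g1_def g2_def dist_real_def using Wpos[of t]
      by (simp add: diff_divide_distrib[symmetric])
    also have "\<dots> \<le> D / 2"
      using * Wpos[of t] by (simp add: divide_le_eq)
    finally show "dist (T a t) (T b t) \<le> 1/2 * dist a b" by (simp add: D_def)
  qed
  obtain \<psi> where fixpt: "T \<psi> = \<psi>"
    using banach_fix_type[of "1/2" T] contr by auto
  define \<phi> where "\<phi> t = apply_bcontfun \<psi> t * W t" for t
  define g where "g s = G s (\<phi> s)" for s
  have gcont: "continuous_on UNIV g" unfolding g_def \<phi>_def by (rule gc)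
  have phi_eq: "\<phi> t = x + Jint g t" for t
  proof -
    have "apply_bcontfun \<psi> t = \<Theta> (apply_bcontfun \<psi>) t" using fixpt Tapp by metis
    then show ?thesis using Wpos[of t] unfolding \<phi>_def \<Theta>_def g_def \<phi>_def by simp
  qed
  have "\<phi> = (\<lambda>t. x + Jint g t)" using phi_eq by auto
  moreover have "((\<lambda>t. x + Jint g t) has_real_derivative g t) (at t)" for t
    using DERIV_add[OF DERIV_const[of x] Jint_deriv[OF gcont, of t]] by simp
  ultimately show ?thesis using phi_eq by (intro exI[of _ "\<lambda>t. x + Jint g t"]) (auto simp: g_def)
qed


lemma abs_sin_diff: "\<bar>sin (y::real) - sin z\<bar> \<le> \<bar>y - z\<bar>"
proof -
  have "\<bar>sin y - sin z\<bar> = 2 * \<bar>sin ((y - z) / 2)\<bar> * \<bar>cos ((y + z) / 2)\<bar>"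
    by (simp add: sin_diff_sin abs_mult)
  also have "\<dots> \<le> 2 * \<bar>(y - z) / 2\<bar> * 1"
    by (intro mult_mono abs_sin_x_le_abs_x) auto
  finally show ?thesis by simp
qed

lemma sin_2pik: "sin ((y::real) + 2 * pi * of_int k) = sin y"
  by (simp add: sin_add)

lemma jvf_alt: "jvf \<omega> B A t y = (- sin y + B + A * cos t) / \<omega>"
  by (simp add: jvf_def divide_simps)

lemma jvf_lip: "\<omega> > 0 \<Longrightarrow> \<bar>jvf \<omega> B A t y - jvf \<omega> B A t z\<bar> \<le> (1/\<omega>) * \<bar>y - z\<bar>"
  using abs_sin_diff[of y z]
  by (simp add: jvf_alt diff_divide_distrib[symmetric] abs_divide divide_right_mono abs_minus_commute)

lemma jvf_bound: "\<omega> > 0 \<Longrightarrow> \<bar>jvf \<omega> B A t y\<bar> \<le> (1 + \<bar>B\<bar> + \<bar>A\<bar>) / \<omega>"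
proof -
  assume w: "\<omega> > 0"
  have "\<bar>- sin y + B + A * cos t\<bar> \<le> 1 + \<bar>B\<bar> + \<bar>A\<bar>"
  proof -
    have "\<bar>A * cos t\<bar> \<le> \<bar>A\<bar>" by (simp add: abs_mult mult_left_le)
    then show ?thesis using abs_sin_le_one[of y] by linarith
  qed
  then show ?thesis using w by (simp add: jvf_alt abs_divide divide_right_mono)
qed

lemma jvf_cont: "\<omega> > 0 \<Longrightarrow> continuous_on UNIV f \<Longrightarrow> continuous_on UNIV (\<lambda>t. jvf \<omega> B A t (f t))"
  unfolding jvf_def by (intro continuous_intros) auto

definition is_sol :: "real \<Rightarrow> real \<Rightarrow> real \<Rightarrow> (real \<Rightarrow> real) \<Rightarrow> bool" where
  "is_sol \<omega> B A \<phi> \<longleftrightarrow> (\<forall>t. (\<phi> has_real_derivative jvf \<omega> B A t (\<phi> t)) (at t))"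

lemma sol_unique:
  assumes "\<omega> > 0" "is_sol \<omega> B A f" "is_sol \<omega> B A g" "f t0 = g t0"
  shows "f t = g t"
  using assms ode_unique[of "jvf \<omega> B A" "1/\<omega>" f g t0 t] jvf_lip[OF assms(1)]
  by (auto simp: is_sol_def)

lemma jflow_sol:
  assumes w: "\<omega> > 0"
  shows "jflow \<omega> B A x 0 = x \<and> is_sol \<omega> B A (jflow \<omega> B A x)"
proof -
  have ex: "\<exists>\<phi>. \<phi> 0 = x \<and> (\<forall>t. (\<phi> has_real_derivative jvf \<omega> B A t (\<phi> t)) (at t))"
    apply (rule ode_exists[where M="(1 + \<bar>B\<bar> + \<bar>A\<bar>) / \<omega>" and L="1/\<omega>"])
    using jvf_cont[OF w] apply blast
    using jvf_bound[OF w] apply blast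
    using jvf_lip[OF w] apply blast
    using w apply simp
    done
  have "\<exists>!\<phi>. \<phi> 0 = x \<and> (\<forall>t. (\<phi> has_real_derivative jvf \<omega> B A t (\<phi> t)) (at t))"
  proof (rule ex_ex1I[OF ex])
    fix f g assume "f 0 = x \<and> (\<forall>t. (f has_real_derivative jvf \<omega> B A t (f t)) (at t))"
      "g 0 = x \<and> (\<forall>t. (g has_real_derivative jvf \<omega> B A t (g t)) (at t))"
    then show "f = g" using sol_unique[OF w, of B A f g 0] by (auto simp: is_sol_def)
  qed
  from theI'[OF this] show ?thesis unfolding jflow_def[symmetric] is_sol_def .
qed

lemma jflow_0: "\<omega> > 0 \<Longrightarrow> jflow \<omega> B A x 0 = x"
  using jflow_sol by blast

lemma jflow_is_sol: "\<omega> > 0 \<Longrightarrow> is_sol \<omega> B A (jflow \<omega> B A x)"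
  using jflow_sol by blast

lemma jflow_eqI:
  assumes "\<omega> > 0" "is_sol \<omega> B A \<psi>" "\<psi> t0 = jflow \<omega> B A x t0"
  shows "\<psi> t = jflow \<omega> B A x t"
  using sol_unique[OF assms(1) assms(2) jflow_is_sol[OF assms(1)] assms(3)] .

lemma jflow_cont: "\<omega> > 0 \<Longrightarrow> continuous_on UNIV (jflow \<omega> B A x)"
  using jflow_is_sol[of \<omega> B A x] unfolding is_sol_def
  by (meson DERIV_isCont continuous_at_imp_continuous_on)

lemma jflow_shift_int:
  assumes w: "\<omega> > 0"
  shows "jflow \<omega> B A (x + 2*pi* of_int k) t = jflow \<omega> B A x t + 2*pi* of_int k"
proof -
  have "is_sol \<omega> B A (\<lambda>t. jflow \<omega> B A x t + 2*pi* of_int k)"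
    unfolding is_sol_def
  proof
    fix t
    have "((\<lambda>t. jflow \<omega> B A x t + 2*pi* of_int k) has_real_derivative jvf \<omega> B A t (jflow \<omega> B A x t) + 0) (at t)"
      using jflow_is_sol[OF w, of B A x] unfolding is_sol_def by (intro DERIV_add DERIV_const) auto
    moreover have "jvf \<omega> B A t (jflow \<omega> B A x t + 2*pi* of_int k) = jvf \<omega> B A t (jflow \<omega> B A x t)"
      by (simp only: jvf_def sin_2pik)
    ultimately show "((\<lambda>t. jflow \<omega> B A x t + 2*pi* of_int k) has_real_derivative jvf \<omega> B A t (jflow \<omega> B A x t + 2*pi* of_int k)) (at t)"
      by simp
  qed
  from jflow_eqI[OF w this, of 0 "x + 2*pi* of_int k" t] show ?thesis using w by (simp add: jflow_0)
qed

lemma jflow_2pi: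
  assumes w: "\<omega> > 0"
  shows "jflow \<omega> B A x (t + 2*pi) = jflow \<omega> B A (jflow \<omega> B A x (2*pi)) t"
proof -
  have "is_sol \<omega> B A (\<lambda>t. jflow \<omega> B A x (t + 2*pi))"
    unfolding is_sol_def
  proof
    fix t
    have d1: "((\<lambda>t. t + 2*pi) has_real_derivative 1 + 0) (at t)"
      by (intro DERIV_add DERIV_ident DERIV_const)
    have "((\<lambda>t. jflow \<omega> B A x (t + 2*pi)) has_real_derivative jvf \<omega> B A (t + 2*pi) (jflow \<omega> B A x (t + 2*pi)) * (1 + 0)) (at t)"
      using jflow_is_sol[OF w, of B A x] unfolding is_sol_def by (intro DERIV_chain2[OF _ d1]) auto
    moreover have "jvf \<omega> B A (t + 2*pi) y = jvf \<omega> B A t y" for y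
      by (simp only: jvf_def cos_periodic)
    ultimately show "((\<lambda>t. jflow \<omega> B A x (t + 2*pi)) has_real_derivative jvf \<omega> B A t (jflow \<omega> B A x (t + 2*pi))) (at t)"
      by simp
  qed
  from jflow_eqI[OF w this, of 0] show ?thesis using w by (simp add: jflow_0)
qed

lemma jflow_mono:
  assumes w: "\<omega> > 0" and xy: "x \<le> y"
  shows "jflow \<omega> B A x t \<le> jflow \<omega> B A y t"
proof (rule ccontr)
  assume neg: "\<not> ?thesis"
  define h where "h u = jflow \<omega> B A y u - jflow \<omega> B A x u" for u
  have hc: "continuous_on UNIV h" unfolding h_def using jflow_cont[OF w]
    by (intro continuous_intros) auto
  have h0: "h 0 \<ge> 0" using xy w by (simp add: h_def jflow_0)
  have ht: "h t < 0" using neg by (simp add: h_def)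
  obtain u where "h u = 0"
  proof (cases "0 \<le> t")
    case True
    then obtain u where "0 \<le> u" "u \<le> t" "h u = 0"
      using IVT2'[of h t 0 0] h0 ht hc by (auto intro: continuous_on_subset)
    then show ?thesis using that by blast
  next
    case False
    then obtain u where "t \<le> u" "u \<le> 0" "h u = 0"
      using IVT'[of h t 0 0] h0 ht hc by (auto intro: continuous_on_subset)
    then show ?thesis using that by blast
  qed
  then have "jflow \<omega> B A y u = jflow \<omega> B A x u" by (simp add: h_def)
  from jflow_eqI[OF w jflow_is_sol[OF w] this] have "jflow \<omega> B A y t = jflow \<omega> B A x t" .
  then show False using ht by (simp add: h_def)
qed

lemma jflow_close:
  assumes w: "\<omega> > 0"
  shows "\<bar>jflow \<omega> B A x t - jflow \<omega> B A 0 t\<bar> \<le> \<bar>x\<bar> + 2*pi"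
proof -
  define k where "k = \<lfloor>x / (2*pi)\<rfloor>"
  have fc: "of_int k \<le> x / (2*pi)" "x / (2*pi) < of_int (k+1)"
    unfolding k_def using floor_correct[of "x / (2*pi)"] by auto
  have k1: "2*pi* of_int k \<le> x"
    using fc(1) pi_gt_zero by (simp add: le_divide_eq mult.commute)
  have k2: "x < 2*pi* of_int (k+1)"
    using fc(2) pi_gt_zero by (simp add: divide_less_eq mult.commute)
  have "jflow \<omega> B A (0 + 2*pi* of_int k) t \<le> jflow \<omega> B A x t"
    using k1 by (intro jflow_mono w) auto
  moreover have "jflow \<omega> B A x t \<le> jflow \<omega> B A (0 + 2*pi* of_int (k+1)) t"
    using k2 by (intro jflow_mono w) auto
  ultimately have "jflow \<omega> B A 0 t + 2*pi* of_int k \<le> jflow \<omega> B A x t"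
     "jflow \<omega> B A x t \<le> jflow \<omega> B A 0 t + 2*pi* of_int (k+1)"
    by (simp_all only: jflow_shift_int[OF w])
  moreover have "2*pi* of_int (k+1) = 2*pi* of_int k + 2*pi" by (simp add: algebra_simps)
  ultimately show ?thesis using k1 k2 abs_ge_self[of x] abs_ge_minus_self[of x]
    unfolding abs_le_iff by linarith
qed


lemma jflow_periodic:
  assumes w: "\<omega> > 0" and fx: "jflow \<omega> B A x (2*pi) = x + 2*pi* of_int k"
  shows "jflow \<omega> B A x (t + 2*pi) = jflow \<omega> B A x t + 2*pi* of_int k"
  using jflow_2pi[OF w, of B A x t] fx jflow_shift_int[OF w, of B A x k t] by simp

lemma jflow_iter:
  assumes w: "\<omega> > 0" and fx: "jflow \<omega> B A x (2*pi) = x + 2*pi* of_int k"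
  shows "jflow \<omega> B A x (2*pi*real n) = x + 2*pi* of_int k * real n"
proof (induction n)
  case 0
  then show ?case using w by (simp add: jflow_0)
next
  case (Suc n)
  have "jflow \<omega> B A x (2*pi*real (Suc n)) = jflow \<omega> B A x (2*pi*real n + 2*pi)"
    by (simp add: algebra_simps)
  also have "\<dots> = jflow \<omega> B A x (2*pi*real n) + 2*pi* of_int k"
    by (rule jflow_periodic[OF w fx])
  finally show ?case using Suc by (simp add: algebra_simps)
qed

lemma rotnum_fixed:
  assumes w: "\<omega> > 0" and fx: "jflow \<omega> B A x (2*pi) = x + 2*pi* of_int k"
  shows "rotnum \<omega> B A = of_int k"
proof -
  define a where "a n = jflow \<omega> B A 0 (2 * pi * real n) / (2 * pi * real n)" for n :: nat
  define C where "C = 2*\<bar>x\<bar> + 2*pi"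
  have bnd: "norm (a n - of_int k) \<le> C / (2*pi) * (1 / real n)" if n: "n \<ge> 1" for n
  proof -
    have np: "2*pi*real n > 0" using n pi_gt_zero by simp
    have "\<bar>jflow \<omega> B A x (2*pi*real n) - jflow \<omega> B A 0 (2*pi*real n)\<bar> \<le> \<bar>x\<bar> + 2*pi"
      by (rule jflow_close[OF w])
    moreover have "\<bar>jflow \<omega> B A 0 (2*pi*real n) - 2*pi*real n * of_int k\<bar>
        = \<bar>(jflow \<omega> B A 0 (2*pi*real n) - jflow \<omega> B A x (2*pi*real n)) + x\<bar>"
      using jflow_iter[OF w fx, of n] by (simp add: algebra_simps)
    moreover have "\<bar>(jflow \<omega> B A 0 (2*pi*real n) - jflow \<omega> B A x (2*pi*real n)) + x\<bar>
        \<le> \<bar>jflow \<omega> B A 0 (2*pi*real n) - jflow \<omega> B A x (2*pi*real n)\<bar> + \<bar>x\<bar>"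
      by (rule abs_triangle_ineq)
    ultimately have "\<bar>jflow \<omega> B A 0 (2*pi*real n) - 2*pi*real n * of_int k\<bar> \<le> C"
      unfolding C_def by (simp add: abs_minus_commute)
    moreover have "a n - of_int k = (jflow \<omega> B A 0 (2*pi*real n) - 2*pi*real n * of_int k) / (2*pi*real n)"
    proof -
      have "2*pi*real n * of_int k / (2*pi*real n) = of_int k" using np n by simp
      then show ?thesis by (simp only: a_def diff_divide_distrib)
    qed
    ultimately have "\<bar>a n - of_int k\<bar> \<le> C / (2*pi*real n)"
      using np by (simp add: abs_divide divide_right_mono)
    then show ?thesis by simp
  qed
  have "(\<lambda>n. a n - of_int k) \<longlonglongrightarrow> 0"
  proof (rule Lim_null_comparison)
    show "\<forall>\<^sub>F n in sequentially. norm (a n - of_int k) \<le> C / (2*pi) * (1 / real n)"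
      using bnd by (intro eventually_sequentiallyI[of 1]) auto
    show "(\<lambda>n. C / (2*pi) * (1 / real n)) \<longlonglongrightarrow> 0"
      by (rule tendsto_mult_right_zero[OF lim_inverse_n'])
  qed
  then have "(\<lambda>n. (a n - of_int k) + of_int k) \<longlonglongrightarrow> 0 + of_int k"
    by (intro tendsto_add tendsto_const)
  then have "a \<longlonglongrightarrow> of_int k" by simp
  then show ?thesis unfolding rotnum_def a_def[symmetric] by (rule limI)
qed

definition px :: "bool \<Rightarrow> real" where
  "px sg = (if sg then pi / 2 else - pi / 2)"

lemma bdry_iff:
  assumes w: "\<omega> > 0"
  shows "(B, A) \<in> bdry \<omega> s sg \<longleftrightarrow> jflow \<omega> B A (px sg) (2*pi) = px sg + 2*pi* of_int s"
proof
  assume "(B, A) \<in> bdry \<omega> s sg"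
  then have r: "rotnum \<omega> B A = of_int s" and
    "\<exists>k::int. jflow \<omega> B A (px sg) (2*pi) = px sg + 2*pi* of_int k"
    unfolding bdry_def phase_lock_def poincare_def px_def by auto
  then obtain k :: int where k: "jflow \<omega> B A (px sg) (2*pi) = px sg + 2*pi* of_int k" by blast
  from rotnum_fixed[OF w k] r have "k = s" by simp
  then show "jflow \<omega> B A (px sg) (2*pi) = px sg + 2*pi* of_int s" using k by simp
next
  assume k: "jflow \<omega> B A (px sg) (2*pi) = px sg + 2*pi* of_int s"
  from rotnum_fixed[OF w k] k show "(B, A) \<in> bdry \<omega> s sg"
    unfolding bdry_def phase_lock_def poincare_def px_def by auto
qed

lemma sin_2px: "sin (2 * px sg - y) = sin y"
proof (cases sg)
  case True
  then show ?thesis by (simp add: px_def)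
next
  case False
  have "sin (- pi - y) = sin y"
    using sin_minus[of "pi + y"] by (simp add: algebra_simps)
  then show ?thesis using False by (simp add: px_def)
qed

lemma jflow_rev:
  assumes w: "\<omega> > 0"
  shows "jflow \<omega> B A (px sg) (- t) = 2 * px sg - jflow \<omega> B A (px sg) t"
proof -
  let ?F = "jflow \<omega> B A (px sg)"
  have "is_sol \<omega> B A (\<lambda>t. 2 * px sg - ?F (- t))"
    unfolding is_sol_def
  proof
    fix t
    have d1: "((\<lambda>t. - t) has_real_derivative - 1) (at t)"
      by (intro DERIV_minus DERIV_ident)
    have "((\<lambda>t. ?F (- t)) has_real_derivative jvf \<omega> B A (- t) (?F (- t)) * (- 1)) (at t)"
      using jflow_is_sol[OF w, of B A "px sg"] unfolding is_sol_def by (intro DERIV_chain2[OF _ d1]) auto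
    then have "((\<lambda>t. 2 * px sg - ?F (- t)) has_real_derivative 0 - jvf \<omega> B A (- t) (?F (- t)) * (- 1)) (at t)"
      by (intro DERIV_diff DERIV_const)
    moreover have "jvf \<omega> B A (- t) (?F (- t)) = jvf \<omega> B A t (2 * px sg - ?F (- t))"
      by (simp only: jvf_def sin_2px cos_minus)
    ultimately show "((\<lambda>t. 2 * px sg - ?F (- t)) has_real_derivative jvf \<omega> B A t (2 * px sg - ?F (- t))) (at t)"
      by simp
  qed
  from jflow_eqI[OF w this, of 0 "px sg" "- t"] show ?thesis using w by (simp add: jflow_0)
qed

lemma jflow_half:
  assumes w: "\<omega> > 0" and fx: "jflow \<omega> B A (px sg) (2*pi) = px sg + 2*pi* of_int s"
  shows "jflow \<omega> B A (px sg) pi = px sg + pi * of_int s"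
proof -
  have "jflow \<omega> B A (px sg) (- pi + 2*pi) = jflow \<omega> B A (px sg) (- pi) + 2*pi* of_int s"
    by (rule jflow_periodic[OF w fx])
  then have "jflow \<omega> B A (px sg) pi = 2 * px sg - jflow \<omega> B A (px sg) pi + 2*pi* of_int s"
    using jflow_rev[OF w, of B A sg pi] by simp
  then show ?thesis by simp
qed

lemma shift_back:
  assumes w: "\<omega> > 0" and h: "jflow \<omega> B A (y + 2*pi* of_int m) (2*pi) = (y + 2*pi* of_int m) + 2*pi* of_int s"
  shows "jflow \<omega> B A y (2*pi) = y + 2*pi* of_int s"
  using h jflow_shift_int[OF w, of B A y m "2*pi"] by simp

lemma flipA_core:
  assumes w: "\<omega> > 0" and fx: "jflow \<omega> B A (px sg) (2*pi) = px sg + 2*pi* of_int s"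
  shows "jflow \<omega> B (-A) (px sg + pi * of_int s) (2*pi) = (px sg + pi * of_int s) + 2*pi* of_int s"
proof -
  let ?F = "jflow \<omega> B A (px sg)"
  have "is_sol \<omega> B (-A) (\<lambda>t. ?F (t + pi))"
    unfolding is_sol_def
  proof
    fix t
    have d1: "((\<lambda>t. t + pi) has_real_derivative 1 + 0) (at t)"
      by (intro DERIV_add DERIV_ident DERIV_const)
    have "((\<lambda>t. ?F (t + pi)) has_real_derivative jvf \<omega> B A (t + pi) (?F (t + pi)) * (1 + 0)) (at t)"
      using jflow_is_sol[OF w, of B A "px sg"] unfolding is_sol_def by (intro DERIV_chain2[OF _ d1]) auto
    moreover have "jvf \<omega> B A (t + pi) y = jvf \<omega> B (-A) t y" for y
      by (simp add: jvf_def)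
    ultimately show "((\<lambda>t. ?F (t + pi)) has_real_derivative jvf \<omega> B (-A) t (?F (t + pi))) (at t)"
      by simp
  qed
  moreover have "?F (0 + pi) = jflow \<omega> B (-A) (px sg + pi * of_int s) 0"
    using jflow_half[OF w fx] w by (simp add: jflow_0)
  ultimately have eq: "?F (t + pi) = jflow \<omega> B (-A) (px sg + pi * of_int s) t" for t
    by (rule jflow_eqI[OF w])
  have "?F (pi + 2*pi) = ?F pi + 2*pi* of_int s"
    by (rule jflow_periodic[OF w fx])
  then show ?thesis using eq[of "2*pi"] jflow_half[OF w fx] by (simp add: algebra_simps)
qed

lemma flipB_core:
  assumes w: "\<omega> > 0" and fx: "jflow \<omega> B A (px sg) (2*pi) = px sg + 2*pi* of_int s"
  shows "jflow \<omega> (-B) A (- px sg - pi * of_int s) (2*pi) = (- px sg - pi * of_int s) + 2*pi* of_int (-s)"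
proof -
  let ?F = "jflow \<omega> B A (px sg)"
  have "is_sol \<omega> (-B) A (\<lambda>t. - ?F (t + pi))"
    unfolding is_sol_def
  proof
    fix t
    have d1: "((\<lambda>t. t + pi) has_real_derivative 1 + 0) (at t)"
      by (intro DERIV_add DERIV_ident DERIV_const)
    have "((\<lambda>t. ?F (t + pi)) has_real_derivative jvf \<omega> B A (t + pi) (?F (t + pi)) * (1 + 0)) (at t)"
      using jflow_is_sol[OF w, of B A "px sg"] unfolding is_sol_def by (intro DERIV_chain2[OF _ d1]) auto
    then have "((\<lambda>t. - ?F (t + pi)) has_real_derivative - (jvf \<omega> B A (t + pi) (?F (t + pi)) * (1 + 0))) (at t)"
      by (rule DERIV_minus)
    moreover have "- (jvf \<omega> B A (t + pi) y * (1 + 0)) = jvf \<omega> (-B) A t (- y)" for y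
      by (simp add: jvf_def)
    ultimately show "((\<lambda>t. - ?F (t + pi)) has_real_derivative jvf \<omega> (-B) A t (- ?F (t + pi))) (at t)"
      by simp
  qed
  moreover have "- ?F (0 + pi) = jflow \<omega> (-B) A (- px sg - pi * of_int s) 0"
    using jflow_half[OF w fx] w by (simp add: jflow_0)
  ultimately have eq: "- ?F (t + pi) = jflow \<omega> (-B) A (- px sg - pi * of_int s) t" for t
    by (rule jflow_eqI[OF w])
  have "?F (pi + 2*pi) = ?F pi + 2*pi* of_int s"
    by (rule jflow_periodic[OF w fx])
  then show ?thesis using eq[of "2*pi"] jflow_half[OF w fx] by (simp add: algebra_simps)
qed

lemma flipA:
  assumes w: "\<omega> > 0" and mem: "(B, A) \<in> bdry \<omega> s sg"
  shows "(B, -A) \<in> bdry \<omega> s (if even s then sg else \<not> sg)"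
proof -
  define sg' where "sg' = (if even s then sg else \<not> sg)"
  have fx: "jflow \<omega> B A (px sg) (2*pi) = px sg + 2*pi* of_int s"
    using mem bdry_iff[OF w] by blast
  have core: "jflow \<omega> B (-A) (px sg + pi * of_int s) (2*pi) = (px sg + pi * of_int s) + 2*pi* of_int s"
    by (rule flipA_core[OF w fx])
  obtain m :: int where m: "px sg + pi * of_int s = px sg' + 2*pi* of_int m"
  proof (cases "even s")
    case True
    then obtain j where "s = 2*j" by blast
    then show ?thesis using that[of j] True by (simp add: sg'_def)
  next
    case False
    then obtain j where j: "s = 2*j + 1" by (metis oddE)
    show ?thesis
    proof (cases sg)
      case True
      then show ?thesis using that[of "j+1"] False j by (simp add: sg'_def px_def algebra_simps)
    next
      case c: False
      then show ?thesis using that[of "j"] False j by (simp add: sg'_def px_def algebra_simps)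
    qed
  qed
  have "jflow \<omega> B (-A) (px sg') (2*pi) = px sg' + 2*pi* of_int s"
    by (rule shift_back[OF w, of _ _ _ m]) (use core m in simp)
  then show ?thesis using bdry_iff[OF w] unfolding sg'_def by blast
qed

lemma flipB:
  assumes w: "\<omega> > 0" and mem: "(B, A) \<in> bdry \<omega> s sg"
  shows "(-B, A) \<in> bdry \<omega> (-s) (if even s then \<not> sg else sg)"
proof -
  define sg' where "sg' = (if even s then \<not> sg else sg)"
  have fx: "jflow \<omega> B A (px sg) (2*pi) = px sg + 2*pi* of_int s"
    using mem bdry_iff[OF w] by blast
  have core: "jflow \<omega> (-B) A (- px sg - pi * of_int s) (2*pi) = (- px sg - pi * of_int s) + 2*pi* of_int (-s)"
    by (rule flipB_core[OF w fx])
  obtain m :: int where m: "- px sg - pi * of_int s = px sg' + 2*pi* of_int m"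
  proof (cases "even s")
    case True
    then obtain j where "s = 2*j" by blast
    then show ?thesis using that[of "-j"] True by (cases sg) (simp_all add: sg'_def px_def algebra_simps)
  next
    case False
    then obtain j where j: "s = 2*j + 1" by (metis oddE)
    show ?thesis
    proof (cases sg)
      case True
      then show ?thesis using that[of "-j-1"] False j by (simp add: sg'_def px_def algebra_simps)
    next
      case c: False
      then show ?thesis using that[of "-j"] False j by (simp add: sg'_def px_def algebra_simps)
    qed
  qed
  have "jflow \<omega> (-B) A (px sg') (2*pi) = px sg' + 2*pi* of_int (-s)"
    by (rule shift_back[OF w, of _ _ _ m]) (use core m in simp)
  then show ?thesis using bdry_iff[OF w] unfolding sg'_def by blast
qed

lemma invol_image:
  assumes "\<And>p. p \<in> S \<Longrightarrow> f p \<in> T" "\<And>p. p \<in> T \<Longrightarrow> f p \<in> S" "\<And>p. f (f p) = p"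
  shows "f ` S = T"
proof
  show "f ` S \<subseteq> T" using assms(1) by blast
  show "T \<subseteq> f ` S"
  proof
    fix p assume "p \<in> T"
    then have "f p \<in> S" by (rule assms(2))
    moreover have "p = f (f p)" using assms(3) by simp
    ultimately show "p \<in> f ` S" by blast
  qed
qed

theorem theorem1p21:
  fixes \<omega> :: real and s :: int
  assumes "\<omega> > 0"
  shows "(even s \<longrightarrow> (\<forall>sg. (\<lambda>(B, A). (B, - A)) ` bdry \<omega> s sg = bdry \<omega> s sg))
       \<and> (odd s \<longrightarrow> (\<forall>sg. (\<lambda>(B, A). (B, - A)) ` bdry \<omega> s sg = bdry \<omega> s (\<not> sg)))
       \<and> (even s \<longrightarrow> (\<forall>sg (g :: real \<Rightarrow> real).
             (\<forall>B A. (B, A) \<in> bdry \<omega> s sg \<longleftrightarrow> B = g A) \<and> g differentiable (at 0)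
             \<longrightarrow> (g has_real_derivative 0) (at 0)))
       \<and> (even s \<longrightarrow> (\<forall>sg. (\<lambda>(B, A). (- B, A)) ` bdry \<omega> s sg = bdry \<omega> (- s) (\<not> sg)))
       \<and> (odd s \<longrightarrow> (\<forall>sg. (\<lambda>(B, A). (- B, A)) ` bdry \<omega> s sg = bdry \<omega> (- s) sg))"
proof (intro conjI impI allI)
  note w = assms
  have invA: "(\<lambda>(B, A). (B, - A)) ((\<lambda>(B, A). (B, - A)) p) = p" for p :: "real \<times> real"
    by (cases p) simp
  have invB: "(\<lambda>(B, A). (- B, A)) ((\<lambda>(B, A). (- B, A)) p) = p" for p :: "real \<times> real"
    by (cases p) simp
  have fA: "(\<lambda>(B, A). (B, - A)) p \<in> bdry \<omega> s' (if even s' then sg else \<not> sg)"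
    if "p \<in> bdry \<omega> s' sg" for p s' sg
    using flipA[OF w, of "fst p" "snd p" s' sg] that by (cases p) simp
  have fB: "(\<lambda>(B, A). (- B, A)) p \<in> bdry \<omega> (- s') (if even s' then \<not> sg else sg)"
    if "p \<in> bdry \<omega> s' sg" for p s' sg
    using flipB[OF w, of "fst p" "snd p" s' sg] that by (cases p) simp
  {
    fix sg assume e: "even s"
    show "(\<lambda>(B, A). (B, - A)) ` bdry \<omega> s sg = bdry \<omega> s sg"
    proof (rule invol_image[OF _ _ invA])
      fix p assume "p \<in> bdry \<omega> s sg"
      from fA[OF this] e show "(\<lambda>(B, A). (B, - A)) p \<in> bdry \<omega> s sg" by simp
    next
      fix p assume "p \<in> bdry \<omega> s sg"
      from fA[OF this] e show "(\<lambda>(B, A). (B, - A)) p \<in> bdry \<omega> s sg" by simp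
    qed
  }
  {
    fix sg assume e: "odd s"
    show "(\<lambda>(B, A). (B, - A)) ` bdry \<omega> s sg = bdry \<omega> s (\<not> sg)"
    proof (rule invol_image[OF _ _ invA])
      fix p assume "p \<in> bdry \<omega> s sg"
      from fA[OF this] e show "(\<lambda>(B, A). (B, - A)) p \<in> bdry \<omega> s (\<not> sg)" by simp
    next
      fix p assume "p \<in> bdry \<omega> s (\<not> sg)"
      from fA[OF this] e show "(\<lambda>(B, A). (B, - A)) p \<in> bdry \<omega> s sg" by simp
    qed
  }
  {
    fix sg assume e: "even s"
    show "(\<lambda>(B, A). (- B, A)) ` bdry \<omega> s sg = bdry \<omega> (- s) (\<not> sg)"
    proof (rule invol_image[OF _ _ invB])
      fix p assume "p \<in> bdry \<omega> s sg"
      from fB[OF this] e show "(\<lambda>(B, A). (- B, A)) p \<in> bdry \<omega> (- s) (\<not> sg)" by simp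
    next
      fix p assume "p \<in> bdry \<omega> (- s) (\<not> sg)"
      from fB[OF this] e show "(\<lambda>(B, A). (- B, A)) p \<in> bdry \<omega> s sg" by simp
    qed
  }
  {
    fix sg assume e: "odd s"
    show "(\<lambda>(B, A). (- B, A)) ` bdry \<omega> s sg = bdry \<omega> (- s) sg"
    proof (rule invol_image[OF _ _ invB])
      fix p assume "p \<in> bdry \<omega> s sg"
      from fB[OF this] e show "(\<lambda>(B, A). (- B, A)) p \<in> bdry \<omega> (- s) sg" by simp
    next
      fix p assume "p \<in> bdry \<omega> (- s) sg"
      from fB[OF this] e show "(\<lambda>(B, A). (- B, A)) p \<in> bdry \<omega> s sg" by simp
    qed
  }
  {
    fix sg and g :: "real \<Rightarrow> real"
    assume e: "even s"
      and H: "(\<forall>B A. (B, A) \<in> bdry \<omega> s sg \<longleftrightarrow> B = g A) \<and> g differentiable (at 0)"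
    have Hm: "(B, A) \<in> bdry \<omega> s sg \<longleftrightarrow> B = g A" for B A
      using H by simp
    have Hd: "g differentiable (at 0)" using H[THEN conjunct2] .
    have sym: "g (- a) = g a" for a
    proof -
      have "(g a, a) \<in> bdry \<omega> s sg" using Hm[of "g a" a] by simp
      then have "(g a, - a) \<in> bdry \<omega> s sg" using flipA[OF w, of "g a" a s sg] e by simp
      then show ?thesis using Hm[of "g a" "- a"] by simp
    qed
    have D: "(g has_real_derivative deriv g 0) (at 0)"
      using DERIV_deriv_iff_real_differentiable[THEN iffD2, OF Hd] .
    have D': "(g has_real_derivative deriv g 0) (at (- 0))" using D by simp
    have eqf: "(\<lambda>x. g (- x)) = g" by (rule ext) (rule sym)
    have "((\<lambda>x. g (- x)) has_real_derivative - deriv g 0) (at 0)"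
      using DERIV_mirror[of g "deriv g 0" 0, THEN iffD1, OF D'] .
    then have "(g has_real_derivative - deriv g 0) (at 0)" by (simp only: eqf)
    with D have "deriv g 0 = - deriv g 0" by (rule DERIV_unique)
    then have "deriv g 0 = 0" by simp
    with D show "(g has_real_derivative 0) (at 0)" by simp
  }
qed

end
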